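(* Let $\mathcal{Y}$ be a Hilbert space (identified with its dual) and let $\mathcal{X}=\mathcal{Z}^*$ be the dual space of a Banach space $\mathcal{Z}$, such that weak-star convergence in $\mathcal{X}$ is metrizable on bounded sets. Let $B:\mathcal{Y}\to\mathcal{Z}$ be a bounded linear operator and $A=B^*:\mathcal{X}\to\mathcal{Y}$. Let $J:\mathcal{X}\to\mathbb{R}\cup\{\infty\}$ be convex and absolutely one-homogeneous, and the convex conjugate of a proper functional on $\mathcal{Z}$, and assume that $u\mapsto \frac12\|Au\|_{\mathcal{Y}}^2+J(u)$ is coercive on $\mathcal{X}$. Let $f\in\mathcal{Y}$. Let $p\in\partial J(0)\cap\mathcal{Z}\subset\mathcal{X}^*$ be such that there exist $w\in\mathcal{Y}$ and $0<\tau<1$ with $$J^*\Big(\frac{p-Bw}{\tau}\Big)=0.$$ Then there exists a minimizer of $$\min_{u\in\mathcal{X}}\ \frac12\|Au-f\|_{\mathcal{Y}}^2\quad\text{subject to}\quad J(u)-\langle p,u\rangle=0.$$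
   Context: $J$ absolutely one-homogeneous means $J(\lambda u)=|\lambda|J(u)$ for all $\lambda\in\mathbb{R}$, $u\in\mathcal{X}$. $J^*$ denotes the convex conjugate of $J$, $J^*(r)=\sup_{u\in\mathcal{X}}\langle r,u\rangle-J(u)$ for $r\in\mathcal{X}^*$. $\partial J(0)$ is the convex subdifferential of $J$ at $0$; $\mathcal{Z}$ is regarded as a subspace of $\mathcal{X}^*=\mathcal{Z}^{**}$. *)

theory Defs
  imports "HOL-Analysis.Analysis" "HOL-Library.Extended_Real"
begin

text \<open>The dual space X = Z^* is modelled as the Banach space of bounded linear
functionals 'z \<Rightarrow>L real.  The duality pairing <u, z> is  blinfun_apply u z.\<close>

definition weak_star_topology :: "('z::real_normed_vector \<Rightarrow>\<^sub>L real) topology" where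
  "weak_star_topology =
     topology_generated_by {{u. blinfun_apply u z \<in> U} | z U. open (U::real set)}"

definition weak_star_metrizable_on_bounded :: "('z::real_normed_vector \<Rightarrow>\<^sub>L real) itself \<Rightarrow> bool" where
  "weak_star_metrizable_on_bounded _ \<longleftrightarrow>
     (\<forall>S :: ('z \<Rightarrow>\<^sub>L real) set. bounded S \<longrightarrow>
        metrizable_space (subtopology weak_star_topology S))"

definition convex_ereal :: "('a::real_vector \<Rightarrow> ereal) \<Rightarrow> bool" where
  "convex_ereal J \<longleftrightarrow>
     (\<forall>u v t. 0 \<le> t \<and> t \<le> 1 \<longrightarrow>
        J (t *\<^sub>R u + (1 - t) *\<^sub>R v) \<le> ereal t * J u + ereal (1 - t) * J v)"

definition abs_one_homogeneous :: "('a::real_vector \<Rightarrow> ereal) \<Rightarrow> bool" where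
  "abs_one_homogeneous J \<longleftrightarrow> (\<forall>(l::real) u. J (l *\<^sub>R u) = ereal \<bar>l\<bar> * J u)"

definition proper_fun :: "('a \<Rightarrow> ereal) \<Rightarrow> bool" where
  "proper_fun G \<longleftrightarrow> (\<forall>z. G z \<noteq> -\<infinity>) \<and> (\<exists>z. G z \<noteq> \<infinity>)"

definition conj_on_dual :: "('z::real_normed_vector \<Rightarrow> ereal) \<Rightarrow> ('z \<Rightarrow>\<^sub>L real) \<Rightarrow> ereal" where
  "conj_on_dual G u = (SUP z. ereal (blinfun_apply u z) - G z)"

definition conj_at_predual :: "(('z::real_normed_vector \<Rightarrow>\<^sub>L real) \<Rightarrow> ereal) \<Rightarrow> 'z \<Rightarrow> ereal" where
  "conj_at_predual J r = (SUP u. ereal (blinfun_apply u r) - J u)"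

definition coercive_ereal :: "('a::real_normed_vector \<Rightarrow> ereal) \<Rightarrow> bool" where
  "coercive_ereal F \<longleftrightarrow> (\<forall>M::real. \<exists>R::real. \<forall>u. R \<le> norm u \<longrightarrow> ereal M \<le> F u)"

definition in_subdiff_at_0 :: "(('z::real_normed_vector \<Rightarrow>\<^sub>L real) \<Rightarrow> ereal) \<Rightarrow> 'z \<Rightarrow> bool" where
  "in_subdiff_at_0 J p \<longleftrightarrow> J 0 \<noteq> \<infinity> \<and> (\<forall>u. J u \<ge> J 0 + ereal (blinfun_apply u p))"

end

theory Submission
  imports Defs
begin

lemma ws_union: "\<Union>{{u::'z::real_normed_vector \<Rightarrow>\<^sub>L real. blinfun_apply u z \<in> U} | z U. open (U::real set)} = UNIV"
  by auto

lemma ws_topspace [simp]: "topspace (weak_star_topology :: ('z::real_normed_vector \<Rightarrow>\<^sub>L real) topology) = UNIV"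
  unfolding weak_star_topology_def by (simp only: topology_generated_by_topspace ws_union)

lemma ws_open_eval: "open U \<Longrightarrow> openin weak_star_topology {u::'z::real_normed_vector \<Rightarrow>\<^sub>L real. blinfun_apply u z \<in> U}"
  unfolding weak_star_topology_def by (rule topology_generated_by_Basis) blast

lemma ws_closed_le: "closedin weak_star_topology {u::'z::real_normed_vector \<Rightarrow>\<^sub>L real. blinfun_apply u z \<le> a}"
proof -
  have "openin weak_star_topology {u::'z \<Rightarrow>\<^sub>L real. blinfun_apply u z \<in> {a<..}}"
    by (rule ws_open_eval) simp
  moreover have "{u::'z \<Rightarrow>\<^sub>L real. blinfun_apply u z \<in> {a<..}} = UNIV - {u. blinfun_apply u z \<le> a}"
    by auto
  ultimately show ?thesis by (simp add: closedin_def)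
qed

lemma alaoglu:
  fixes R :: real
  assumes R: "R \<ge> 0"
  shows "compactin weak_star_topology {u::'z::real_normed_vector \<Rightarrow>\<^sub>L real. norm u \<le> R}"
proof -
  define K where "K = {g::'z \<Rightarrow> real. linear g \<and> (\<forall>z. g z \<in> {-(R*norm z)..R*norm z})}"
  have "compactin (product_topology (\<lambda>_. euclideanreal) UNIV) (PiE UNIV (\<lambda>z::'z. {-(R*norm z)..R*norm z}))"
    by (simp add: compactin_PiE)
  hence c1: "compact {g::'z \<Rightarrow> real. \<forall>z. g z \<in> {-(R*norm z)..R*norm z}}"
    by (simp add: euclidean_product_topology PiE_UNIV_domain Pi_def)
  have cl: "closed {g::'z \<Rightarrow> real. linear g}"
  proof -
    have "{g::'z \<Rightarrow> real. linear g} = {g. \<forall>x y. g (x+y) = g x + g y} \<inter> {g. \<forall>c x. g (c *\<^sub>R x) = c * g x}"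
      by (auto simp: linear_iff)
    moreover have "closed {g::'z \<Rightarrow> real. \<forall>x y. g (x+y) = g x + g y}"
      by (intro closed_Collect_all closed_Collect_eq continuous_intros continuous_on_product_coordinates)
    moreover have "closed {g::'z \<Rightarrow> real. \<forall>c x. g (c *\<^sub>R x) = c * g x}"
      by (intro closed_Collect_all closed_Collect_eq continuous_intros continuous_on_product_coordinates)
    ultimately show ?thesis by auto
  qed
  have "K = {g::'z \<Rightarrow> real. \<forall>z. g z \<in> {-(R*norm z)..R*norm z}} \<inter> {g. linear g}"
    unfolding K_def by auto
  hence cK: "compact K" using c1 cl by (simp add: compact_Int_closed)
  have bl: "bounded_linear g" if "g \<in> K" for g
    using that unfolding K_def
    by (intro bounded_linear_intro[where K=R]) (auto simp: linear_add linear_scale abs_le_iff mult.commute, smt (verit))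
  have app: "blinfun_apply (Blinfun g) = g" if "g \<in> K" for g
    using bl[OF that] by (simp add: bounded_linear_Blinfun_apply)
  have cont: "continuous_map (subtopology euclidean K) weak_star_topology Blinfun"
    unfolding weak_star_topology_def
  proof (rule continuous_on_generated_topo)
    fix U assume "U \<in> {{u::'z \<Rightarrow>\<^sub>L real. blinfun_apply u z \<in> U} | z U. open (U::real set)}"
    then obtain z V where U: "U = {u::'z \<Rightarrow>\<^sub>L real. blinfun_apply u z \<in> V}" and V: "open V" by blast
    have "Blinfun -` U \<inter> topspace (subtopology euclidean K) = {g. g z \<in> V} \<inter> K"
      using app by (auto simp: U)
    moreover have "open {g::'z \<Rightarrow> real. g z \<in> V}"
      using open_vimage[OF V continuous_on_product_coordinates[of z]] by (simp add: vimage_def)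
    ultimately show "openin (subtopology euclidean K) (Blinfun -` U \<inter> topspace (subtopology euclidean K))"
      by (auto simp: openin_subtopology)
  qed (simp only: ws_union, simp)
  have "compactin weak_star_topology (Blinfun ` K)"
    by (rule image_compactin[OF _ cont]) (simp add: compactin_subtopology cK)
  moreover have "Blinfun ` K = {u. norm u \<le> R}"
  proof
    show "Blinfun ` K \<subseteq> {u. norm u \<le> R}"
    proof clarify
      fix g assume g: "g \<in> K"
      show "norm (Blinfun g) \<le> R"
        using g R by (intro norm_blinfun_bound) (auto simp: app K_def abs_le_iff mult.commute, smt (verit))
    qed
    show "{u. norm u \<le> R} \<subseteq> Blinfun ` K"
    proof clarify
      fix u :: "'z \<Rightarrow>\<^sub>L real" assume "norm u \<le> R"
      have "blinfun_apply u \<in> K"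
      proof -
        have "\<bar>blinfun_apply u z\<bar> \<le> R * norm z" for z
          using norm_blinfun[of u z] mult_right_mono[OF \<open>norm u \<le> R\<close> norm_ge_zero, of z]
          by simp
        moreover have "linear (blinfun_apply u)"
          using blinfun.bounded_linear_right bounded_linear.linear by blast
        ultimately show ?thesis unfolding K_def by (simp add: abs_le_iff minus_le_iff)
      qed
      thus "u \<in> Blinfun ` K" by (metis blinfun_apply_inverse image_eqI)
    qed
  qed
  ultimately show ?thesis by simp
qed



lemma ws_closed_UNIV: "closedin weak_star_topology (UNIV :: ('z::real_normed_vector \<Rightarrow>\<^sub>L real) set)"
  using closedin_topspace[of "weak_star_topology :: ('z \<Rightarrow>\<^sub>L real) topology"] by simp

theorem theorem2:
  fixes B :: "'y::{real_inner, complete_space} \<Rightarrow>\<^sub>L 'z::banach"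
    and A :: "('z \<Rightarrow>\<^sub>L real) \<Rightarrow> 'y"
    and J :: "('z \<Rightarrow>\<^sub>L real) \<Rightarrow> ereal"
    and f :: 'y and p :: 'z and w :: 'y and \<tau> :: real
  assumes metr: "weak_star_metrizable_on_bounded TYPE('z \<Rightarrow>\<^sub>L real)"
    and adj: "\<And>u y. inner (A u) y = blinfun_apply u (blinfun_apply B y)"
    and Jconv: "convex_ereal J"
    and Jhom: "abs_one_homogeneous J"
    and Jconj: "\<exists>G. proper_fun G \<and> J = conj_on_dual G"
    and coer: "coercive_ereal (\<lambda>u. ereal (1/2 * (norm (A u))\<^sup>2) + J u)"
    and p_sub: "in_subdiff_at_0 J p"
    and tau: "0 < \<tau>" "\<tau> < 1"
    and src: "conj_at_predual J ((1 / \<tau>) *\<^sub>R (p - blinfun_apply B w)) = 0"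
  shows "\<exists>u. J u = ereal (blinfun_apply u p) \<and>
           (\<forall>v. J v = ereal (blinfun_apply v p) \<longrightarrow>
              1/2 * (norm (A u - f))\<^sup>2 \<le> 1/2 * (norm (A v - f))\<^sup>2)"
proof -
  define T where "T = (weak_star_topology :: ('z \<Rightarrow>\<^sub>L real) topology)"
  have J0: "J 0 = 0"
  proof -
    have "J ((0::real) *\<^sub>R 0) = ereal \<bar>0::real\<bar> * J 0"
      using Jhom unfolding abs_one_homogeneous_def by blast
    thus ?thesis by (simp add: zero_ereal_def[symmetric])
  qed
  have ge: "ereal (blinfun_apply u p) \<le> J u" for u
    using p_sub J0 unfolding in_subdiff_at_0_def by simp
  define Fe where "Fe = {u. J u = ereal (blinfun_apply u p)}"
  have Fe_le: "Fe = {u. J u \<le> ereal (blinfun_apply u p)}"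
    unfolding Fe_def using ge by (auto intro: antisym)
  have zFe: "0 \<in> Fe" unfolding Fe_def using J0 by simp
  obtain G where G: "proper_fun G" and JG: "J = conj_on_dual G" using Jconj by blast
  have cFe: "closedin T Fe"
  proof -
    define S where "S = (\<lambda>z. {u::'z \<Rightarrow>\<^sub>L real. blinfun_apply u (z - p) \<le> real_of_ereal (G z)})"
    have "Fe = \<Inter> (insert UNIV (S ` {z. G z \<noteq> \<infinity>}))"
    proof -
      have "J u \<le> ereal (blinfun_apply u p) \<longleftrightarrow> (\<forall>z. G z \<noteq> \<infinity> \<longrightarrow> u \<in> S z)" for u
      proof -
        have "J u \<le> ereal (blinfun_apply u p) \<longleftrightarrow> (\<forall>z. ereal (blinfun_apply u z) - G z \<le> ereal (blinfun_apply u p))"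
          unfolding JG conj_on_dual_def by (simp add: SUP_le_iff)
        moreover have "(ereal (blinfun_apply u z) - G z \<le> ereal (blinfun_apply u p)) \<longleftrightarrow> (G z \<noteq> \<infinity> \<longrightarrow> u \<in> S z)" for z
        proof (cases "G z")
          case (real g)
          then show ?thesis by (simp add: S_def blinfun.diff_right) linarith
        next
          case PInf
          then show ?thesis by simp
        next
          case MInf
          then show ?thesis using G unfolding proper_fun_def by simp
        qed
        ultimately show ?thesis by simp
      qed
      thus ?thesis unfolding Fe_le by auto
    qed
    moreover have "closedin T (\<Inter> (insert UNIV (S ` {z. G z \<noteq> \<infinity>})))"
      by (rule closedin_Inter) (auto simp: T_def S_def ws_closed_le ws_closed_UNIV)
    ultimately show ?thesis by simp
  qed
  define N where "N = (\<lambda>s. {u. norm (A u - f) \<le> s})"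
  have cN: "closedin T (N s)" if "0 \<le> s" for s
  proof -
    have "N s = \<Inter> ((\<lambda>y. {u::'z \<Rightarrow>\<^sub>L real. blinfun_apply u (blinfun_apply B y) \<le> s + inner f y}) ` {y. norm y \<le> 1})"
    proof (intro equalityI subsetI)
      fix u assume u: "u \<in> N s"
      have "blinfun_apply u (blinfun_apply B y) \<le> s + inner f y" if "norm y \<le> 1" for y
      proof -
        have "blinfun_apply u (blinfun_apply B y) - inner f y = inner (A u - f) y"
          by (simp add: adj inner_diff_left)
        also have "\<dots> \<le> norm (A u - f) * norm y" by (rule norm_cauchy_schwarz)
        also have "\<dots> \<le> s * 1" using u that \<open>0 \<le> s\<close> by (intro mult_mono) (auto simp: N_def)
        finally show ?thesis by simp
      qed
      thus "u \<in> \<Inter> ((\<lambda>y. {u::'z \<Rightarrow>\<^sub>L real. blinfun_apply u (blinfun_apply B y) \<le> s + inner f y}) ` {y. norm y \<le> 1})" by auto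
    next
      fix u assume u: "u \<in> \<Inter> ((\<lambda>y. {u::'z \<Rightarrow>\<^sub>L real. blinfun_apply u (blinfun_apply B y) \<le> s + inner f y}) ` {y. norm y \<le> 1})"
      show "u \<in> N s"
      proof (cases "A u - f = 0")
        case True then show ?thesis using \<open>0 \<le> s\<close> by (simp add: N_def)
      next
        case False
        define y where "y = (1 / norm (A u - f)) *\<^sub>R (A u - f)"
        have "norm y \<le> 1" using False by (simp add: y_def)
        hence "blinfun_apply u (blinfun_apply B y) \<le> s + inner f y" using u by auto
        hence "inner (A u - f) y \<le> s" by (simp add: adj inner_diff_left)
        moreover have "inner (A u - f) y = norm (A u - f)"
          using False by (simp add: y_def power2_norm_eq_inner[symmetric] power2_eq_square)
        ultimately show ?thesis by (simp add: N_def)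
      qed
    qed
    moreover have "closedin T (\<Inter> ((\<lambda>y. {u::'z \<Rightarrow>\<^sub>L real. blinfun_apply u (blinfun_apply B y) \<le> s + inner f y}) ` {y. norm y \<le> 1}))"
      by (rule closedin_Inter) (auto simp: T_def ws_closed_le intro: exI[where x=0])
    ultimately show ?thesis by simp
  qed
  define V where "V = (\<lambda>v. norm (A v - f)) ` Fe"
  define m where "m = Inf V"
  have Vne: "V \<noteq> {}" using zFe by (auto simp: V_def)
  have Vbdd: "bdd_below V" by (auto simp: V_def intro!: bdd_belowI[where m=0])
  have m0: "0 \<le> m" unfolding m_def using Vne by (intro cInf_greatest) (auto simp: V_def)
  have mle: "m \<le> norm (A v - f)" if "v \<in> Fe" for v
    unfolding m_def using Vbdd that by (intro cInf_lower) (auto simp: V_def)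
  have mlt: "\<exists>v\<in>Fe. norm (A v - f) < s" if "m < s" for s
    using cInf_lessD[OF Vne, of s] that unfolding m_def V_def by auto
  define s0 where "s0 = m + 1"
  define c where "c = s0 + norm f"
  define r where "r = (1 / \<tau>) *\<^sub>R (p - blinfun_apply B w)"
  have pr: "p = \<tau> *\<^sub>R r + blinfun_apply B w" using tau by (simp add: r_def)
  have Jr: "ereal (blinfun_apply u r) \<le> J u" for u
  proof -
    have "ereal (blinfun_apply u r) - J u \<le> 0"
      using src unfolding conj_at_predual_def r_def[symmetric] by (metis SUP_upper UNIV_I)
    thus ?thesis
      by (cases "J u") auto
  qed
  define Jb where "Jb = c * norm w / (1 - \<tau>)"
  have Jbound: "blinfun_apply v p \<le> Jb" if "v \<in> Fe" "norm (A v - f) \<le> s0" for v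
  proof -
    have "ereal (blinfun_apply v r) \<le> ereal (blinfun_apply v p)" using Jr[of v] that(1) by (simp add: Fe_def)
    hence vr: "blinfun_apply v r \<le> blinfun_apply v p" by simp
    have "norm (A v) \<le> c"
      using that(2) norm_triangle_ineq[of "A v - f" f] by (simp add: c_def)
    have "blinfun_apply v p = \<tau> * blinfun_apply v r + inner (A v) w"
      by (simp add: pr adj blinfun.add_right blinfun.scaleR_right)
    also have "\<dots> \<le> \<tau> * blinfun_apply v p + norm (A v) * norm w"
      using vr tau norm_cauchy_schwarz[of "A v" w] by (intro add_mono mult_left_mono) auto
    finally have "(1 - \<tau>) * blinfun_apply v p \<le> norm (A v) * norm w" by (simp add: algebra_simps)
    also have "\<dots> \<le> c * norm w" using \<open>norm (A v) \<le> c\<close> by (simp add: mult_right_mono)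
    finally show ?thesis using tau by (simp add: Jb_def pos_le_divide_eq mult.commute)
  qed
  obtain R0 where R0: "\<And>u. R0 \<le> norm u \<Longrightarrow> ereal (1/2 * c\<^sup>2 + Jb + 1) \<le> ereal (1/2 * (norm (A u))\<^sup>2) + J u"
    using coer unfolding coercive_ereal_def by blast
  define R where "R = max R0 0"
  have Rb: "norm v \<le> R" if "v \<in> Fe" "norm (A v - f) \<le> s0" for v
  proof (rule ccontr)
    assume "\<not> norm v \<le> R"
    hence "R0 \<le> norm v" by (simp add: R_def)
    from R0[OF this] have "ereal (1/2 * c\<^sup>2 + Jb + 1) \<le> ereal (1/2 * (norm (A v))\<^sup>2 + blinfun_apply v p)"
      using that(1) by (simp add: Fe_def)
    hence "1/2 * c\<^sup>2 + Jb + 1 \<le> 1/2 * (norm (A v))\<^sup>2 + blinfun_apply v p" by simp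
    moreover have "norm (A v) \<le> c"
      using that(2) norm_triangle_ineq[of "A v - f" f] by (simp add: c_def)
    hence "(norm (A v))\<^sup>2 \<le> c\<^sup>2" by (intro power_mono) auto
    ultimately show False using Jbound[OF that] by linarith
  qed
  define Ba where "Ba = {u::'z \<Rightarrow>\<^sub>L real. norm u \<le> R}"
  have cBa: "compactin T Ba" unfolding Ba_def T_def by (rule alaoglu) (simp add: R_def)
  define \<U> where "\<U> = insert Fe (N ` {m<..s0})"
  have "Ba \<inter> \<Inter>\<U> \<noteq> {}"
  proof -
    have "\<forall>C\<in>\<U>. closedin T C" unfolding \<U>_def using cFe cN m0 by auto
    moreover have "Ba \<inter> \<Inter>\<F> \<noteq> {}" if "finite \<F>" "\<F> \<subseteq> \<U>" for \<F>
    proof -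
      have "\<F> - {Fe} \<subseteq> N ` {m<..s0}" "finite (\<F> - {Fe})" using that by (auto simp: \<U>_def)
      then obtain I where I: "I \<subseteq> {m<..s0}" "finite I" "\<F> - {Fe} = N ` I"
        using finite_subset_image[of "\<F> - {Fe}" N "{m<..s0}"] by blast
      define t where "t = Min (insert s0 I)"
      have t1: "m < t" unfolding t_def using I(1,2) by (subst Min_gr_iff) (auto simp: s0_def)
      have t2: "t \<le> s0" unfolding t_def using I(2) by (intro Min_le) auto
      have t3: "t \<le> i" if "i \<in> I" for i unfolding t_def using I(2) that by (intro Min_le) auto
      obtain v where v: "v \<in> Fe" "norm (A v - f) < t" using mlt[OF t1] by blast
      have "norm (A v - f) \<le> s0" using v(2) t2 by linarith
      hence "v \<in> Ba" using Rb[of v] v(1) unfolding Ba_def by blast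
      moreover have "v \<in> X" if "X \<in> \<F>" for X
      proof (cases "X = Fe")
        case True then show ?thesis using v by simp
      next
        case False
        hence "X \<in> \<F> - {Fe}" using that by blast
        hence "X \<in> N ` I" using I(3) by simp
        then obtain i where i: "i \<in> I" "X = N i" by (rule imageE) simp
        have "norm (A v - f) \<le> i" using v(2) t3[OF i(1)] by linarith
        then show ?thesis unfolding i(2) N_def by simp
      qed
      ultimately have "v \<in> Ba \<inter> \<Inter>\<F>" by blast
      thus ?thesis by blast
    qed
    ultimately show ?thesis using cBa[unfolded compactin_fip] by (elim conjE) (rule mp, erule allE, assumption, blast)
  qed
  then obtain u where uU: "u \<in> \<Inter>\<U>" by blast
  have u: "u \<in> Fe" "\<And>s. m < s \<Longrightarrow> s \<le> s0 \<Longrightarrow> norm (A u - f) \<le> s"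
    using uU unfolding \<U>_def N_def by auto
  have um: "norm (A u - f) \<le> m"
  proof (rule ccontr)
    assume nm: "\<not> norm (A u - f) \<le> m"
    hence "m < min s0 ((m + norm (A u - f)) / 2)" by (simp add: s0_def)
    from u(2)[OF this] show False using nm by simp
  qed
  show ?thesis
  proof (intro exI conjI allI impI)
    show "J u = ereal (blinfun_apply u p)" using u(1) by (simp add: Fe_def)
    fix v assume "J v = ereal (blinfun_apply v p)"
    hence "norm (A u - f) \<le> norm (A v - f)" using um mle[of v] by (simp add: Fe_def)
    thus "1/2 * (norm (A u - f))\<^sup>2 \<le> 1/2 * (norm (A v - f))\<^sup>2" by (simp add: power_mono)
  qed
qed

end
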